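(* Let the universe be $\mathbb{Z}$ and let $\mathcal{C}=\{\mathbb{Z}\setminus\{i\}\}_{i\in\mathbb{Z}}$. There is no algorithm that non-uniformly generates from $\mathcal{C}$ and whose generation times form a Pareto-optimal sequence.
   Context: Index the languages of $\mathcal{C}$ as $L_1,L_2,\ldots$ by any enumeration without repetition. An enumeration of a language $L$ is a sequence $x_1,x_2,\ldots$ with every $x_t\in L$ and every $x\in L$ equal to some $x_t$. A generating algorithm at each time $t\ge1$ receives $x_1,\ldots,x_t$ and outputs $z_t$; $S_t$ is the set of distinct strings among $x_1,\ldots,x_t$. An algorithm $\mathcal{G}$ non-uniformly generates from $\mathcal{C}$ if for every $i$ there is a finite $t(L_i)$ such that for every enumeration of $L_i$, $z_t\in L_i\setminus S_t$ whenever $|S_t|\ge t(L_i)$; its generation time $t_{\mathcal{G}}(L_i)$ is the least such value ($\infty$ if none). A sequence $t(L_1),t(L_2),\ldots$ is Pareto-optimal if every algorithm $\mathcal{G}$ that non-uniformly generates from $\mathcal{C}$ and satisfies $t_{\mathcal{G}}(L_i)<t(L_i)$ for some $i$ also satisfies $t_{\mathcal{G}}(L_j)>t(L_j)$ for some other $j$. *)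

theory Defs
  imports Main "HOL-Library.Extended_Nat"
begin

text \<open>An algorithm is an arbitrary function from the finite prefix
  x_1,...,x_t (a nonempty list) to an output string z_t.
  An enumeration of L is a sequence x :: nat => 'a (x 0 plays the role of x_1)
  whose range is exactly L.  At time t >= 1 the algorithm sees
  map x [0..<t] and S_t = x ` {..<t}.\<close>

definition is_enumeration :: "(nat \<Rightarrow> 'a) \<Rightarrow> 'a set \<Rightarrow> bool" where
  "is_enumeration x L \<longleftrightarrow> range x = L"

definition gen_bound :: "('a list \<Rightarrow> 'a) \<Rightarrow> 'a set \<Rightarrow> nat \<Rightarrow> bool" where
  "gen_bound G L T \<longleftrightarrow>
     (\<forall>x. is_enumeration x L \<longrightarrow>
        (\<forall>t\<ge>1. card (x ` {..<t}) \<ge> T \<longrightarrow> G (map x [0..<t]) \<in> L - x ` {..<t}))"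

definition gen_time :: "('a list \<Rightarrow> 'a) \<Rightarrow> 'a set \<Rightarrow> enat" where
  "gen_time G L = (if \<exists>T. gen_bound G L T then enat (LEAST T. gen_bound G L T) else \<infinity>)"

definition nonuniform_generates :: "('a list \<Rightarrow> 'a) \<Rightarrow> (nat \<Rightarrow> 'a set) \<Rightarrow> bool" where
  "nonuniform_generates G Lf \<longleftrightarrow> (\<forall>i. \<exists>T. gen_bound G (Lf i) T)"

definition pareto_optimal :: "(nat \<Rightarrow> 'a set) \<Rightarrow> (nat \<Rightarrow> enat) \<Rightarrow> bool" where
  "pareto_optimal Lf tt \<longleftrightarrow>
     (\<forall>G i. nonuniform_generates G Lf \<and> gen_time G (Lf i) < tt i \<longrightarrow>
        (\<exists>j. j \<noteq> i \<and> gen_time G (Lf j) > tt j))"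

end

theory Submission
  imports Defs
begin

lemma gb_mono: "gen_bound G L T \<Longrightarrow> T \<le> T' \<Longrightarrow> gen_bound G L T'"
  unfolding gen_bound_def by (meson order_trans)

lemma gen_time_le: "gen_bound G L T \<Longrightarrow> gen_time G L \<le> enat T"
  unfolding gen_time_def by (auto intro: Least_le)

lemma gen_time_eq: "gen_bound G L T \<Longrightarrow> gen_time G L = enat (LEAST T. gen_bound G L T)"
  unfolding gen_time_def by auto

lemma extend_enum:
  fixes idx :: "nat \<Rightarrow> int" and z :: int
  assumes "bij idx" "finite W" "W \<noteq> {}" "z \<notin> W"
  shows "\<exists>x t. is_enumeration x (UNIV - {z}) \<and> t \<ge> 1 \<and> x ` {..<t} = W
           \<and> map x [0..<t] = sorted_list_of_set W"
proof -
  define ys where "ys = sorted_list_of_set W"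
  define n where "n = length ys"
  have sys: "set ys = W" using assms ys_def by simp
  have n1: "n \<ge> 1" using sys assms(3) n_def by (cases ys) auto
  define x where "x i = (if i < n then ys ! i else if idx (i - n) = z then ys ! 0 else idx (i - n))" for i
  have "map x [0..<n] = map ((!) ys) [0..<n]"
    by (rule map_cong) (auto simp: x_def)
  hence m: "map x [0..<n] = ys" using map_nth[of ys] n_def by simp
  have img: "x ` {..<n} = W"
  proof -
    have "x ` {..<n} = set (map x [0..<n])" by auto
    thus ?thesis using m sys by simp
  qed
  have "range x = UNIV - {z}"
  proof
    show "range x \<subseteq> UNIV - {z}"
    proof
      fix y assume "y \<in> range x"
      then obtain i where i: "y = x i" by auto
      have y0: "ys ! 0 \<in> W" using sys n1 n_def by (metis nth_mem One_nat_def less_le_trans zero_less_one)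
      show "y \<in> UNIV - {z}"
        using i assms(4) y0 sys unfolding x_def by (auto split: if_splits simp: n_def)
    qed
  next
    show "UNIV - {z} \<subseteq> range x"
    proof
      fix y assume y: "y \<in> UNIV - {z}"
      obtain k where k: "idx k = y" using assms(1) by (metis bij_pointE)
      have "x (k + n) = y" using k y unfolding x_def by auto
      thus "y \<in> range x" by (metis rangeI)
    qed
  qed
  thus ?thesis using img m n1 ys_def unfolding is_enumeration_def by blast
qed

lemma big_time:
  fixes idx :: "nat \<Rightarrow> int" and G :: "int list \<Rightarrow> int"
  assumes "bij idx" "finite W" "W \<noteq> {}"
  shows "\<exists>z. z \<notin> W \<and> (\<forall>T. gen_bound G (UNIV - {z}) T \<longrightarrow> card W < T)"
proof -
  define ys where "ys = sorted_list_of_set W"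
  define w where "w = G ys"
  obtain z where z: "z \<notin> W" "w \<in> W \<or> z = w"
  proof (cases "w \<in> W")
    case True
    obtain c where "c \<notin> W" using assms(2) ex_new_if_finite infinite_UNIV_int by blast
    thus ?thesis using that True by blast
  next
    case False thus ?thesis using that by blast
  qed
  obtain x t where xt: "is_enumeration x (UNIV - {z})" "t \<ge> 1" "x ` {..<t} = W"
      "map x [0..<t] = ys"
    using extend_enum[OF assms z(1)] ys_def by blast
  have bad: "G (map x [0..<t]) \<notin> (UNIV - {z}) - x ` {..<t}"
    using xt z w_def by auto
  show ?thesis
  proof (intro exI conjI allI impI)
    show "z \<notin> W" by fact
    fix T assume gb: "gen_bound G (UNIV - {z}) T"
    show "card W < T"
    proof (rule ccontr)
      assume "\<not> card W < T"
      hence "card (x ` {..<t}) \<ge> T" using xt by simp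
      thus False using gb xt bad unfolding gen_bound_def by blast
    qed
  qed
qed

theorem mainTheorem4:
  fixes idx :: "nat \<Rightarrow> int"
  assumes "bij idx"
  shows "\<not> (\<exists>G :: int list \<Rightarrow> int.
            nonuniform_generates G (\<lambda>k. UNIV - {idx k}) \<and>
            pareto_optimal (\<lambda>k. UNIV - {idx k}) (\<lambda>k. gen_time G (UNIV - {idx k})))"
proof
  assume "\<exists>G :: int list \<Rightarrow> int.
            nonuniform_generates G (\<lambda>k. UNIV - {idx k}) \<and>
            pareto_optimal (\<lambda>k. UNIV - {idx k}) (\<lambda>k. gen_time G (UNIV - {idx k}))"
  then obtain G :: "int list \<Rightarrow> int" where
    ng: "nonuniform_generates G (\<lambda>k. UNIV - {idx k})" and
    po: "pareto_optimal (\<lambda>k. UNIV - {idx k}) (\<lambda>k. gen_time G (UNIV - {idx k}))" by blast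
  define tb where "tb c = (LEAST T. gen_bound G (UNIV - {c}) T)" for c
  have ex: "\<exists>T. gen_bound G (UNIV - {c}) T" for c
  proof -
    obtain k where "idx k = c" using assms by (metis bij_pointE)
    thus ?thesis using ng unfolding nonuniform_generates_def by blast
  qed
  have gbt: "gen_bound G (UNIV - {c}) (tb c)" for c
    unfolding tb_def using ex by (rule LeastI_ex)
  have gt: "gen_time G (UNIV - {c}) = enat (tb c)" for c
    using gen_time_eq[OF gbt] tb_def by simp
  have bt: "\<exists>z. z \<notin> W \<and> card W < tb z" if "finite W" "W \<noteq> {}" for W
    using big_time[OF assms that, of G] gbt by blast
  obtain a where a: "1 < tb a" using bt[of "{0}"] by auto
  define v where "v = tb a"
  define zsel where "zsel S = (SOME z. z \<notin> S \<and> z \<noteq> a \<and> v \<le> tb z)" for S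
  have zs: "zsel S \<notin> S \<and> zsel S \<noteq> a \<and> v \<le> tb (zsel S)" if "finite S" "a \<notin> S" "card S = v - 1" for S
  proof -
    have "card (insert a S) = v" using that a v_def by simp
    moreover obtain z where "z \<notin> insert a S" "card (insert a S) < tb z" using bt[of "insert a S"] \<open>finite S\<close> by auto
    ultimately have "z \<notin> insert a S" "v < tb z" by auto
    hence "\<exists>z. z \<notin> S \<and> z \<noteq> a \<and> v \<le> tb z" by auto
    thus ?thesis unfolding zsel_def by (rule someI_ex)
  qed
  define G' where "G' xs = (if a \<notin> set xs \<and> card (set xs) = v - 1 then zsel (set xs) else G xs)" for xs
  have setm: "set (map x [0..<t]) = x ` {..<t}" for x :: "nat \<Rightarrow> int" and t by auto
  have A: "gen_bound G' (UNIV - {a}) (v - 1)"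
    unfolding gen_bound_def
  proof (intro allI impI)
    fix x t assume x: "is_enumeration x (UNIV - {a})" and t: "1 \<le> t" and c: "v - 1 \<le> card (x ` {..<t})"
    have aS: "a \<notin> x ` {..<t}" using x unfolding is_enumeration_def by auto
    show "G' (map x [0..<t]) \<in> UNIV - {a} - x ` {..<t}"
    proof (cases "card (x ` {..<t}) = v - 1")
      case True
      thus ?thesis using zs[of "x ` {..<t}"] aS unfolding G'_def setm by auto
    next
      case False
      hence "card (x ` {..<t}) \<ge> tb a" using c v_def by simp
      hence "G (map x [0..<t]) \<in> UNIV - {a} - x ` {..<t}"
        using gbt[of a] x t unfolding gen_bound_def by blast
      thus ?thesis using False unfolding G'_def setm by auto
    qed
  qed
  have B: "gen_bound G' (UNIV - {b}) (tb b)" if "b \<noteq> a" for b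
    unfolding gen_bound_def
  proof (intro allI impI)
    fix x t assume x: "is_enumeration x (UNIV - {b})" and t: "1 \<le> t" and c: "tb b \<le> card (x ` {..<t})"
    show "G' (map x [0..<t]) \<in> UNIV - {b} - x ` {..<t}"
    proof (cases "a \<notin> x ` {..<t} \<and> card (x ` {..<t}) = v - 1")
      case True
      have z: "zsel (x ` {..<t}) \<notin> x ` {..<t} \<and> v \<le> tb (zsel (x ` {..<t}))"
        using zs[of "x ` {..<t}"] True by auto
      have "zsel (x ` {..<t}) \<noteq> b"
      proof
        assume "zsel (x ` {..<t}) = b"
        hence "v \<le> tb b" using z by simp
        thus False using c True a v_def by linarith
      qed
      thus ?thesis using z True unfolding G'_def setm by auto
    next
      case False
      hence "G (map x [0..<t]) \<in> UNIV - {b} - x ` {..<t}"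
        using gbt[of b] x t c unfolding gen_bound_def by blast
      thus ?thesis using False unfolding G'_def setm by auto
    qed
  qed
  have allb: "gen_bound G' (UNIV - {b}) (if b = a then v - 1 else tb b)" for b
    using A B by auto
  have ng': "nonuniform_generates G' (\<lambda>k. UNIV - {idx k})"
    unfolding nonuniform_generates_def using allb by blast
  obtain i where i: "idx i = a" using assms by (metis bij_pointE)
  have "gen_time G' (UNIV - {idx i}) \<le> enat (v - 1)" using gen_time_le[OF A] i by simp
  also have "\<dots> < gen_time G (UNIV - {idx i})" using gt i a v_def by simp
  finally have lt: "gen_time G' (UNIV - {idx i}) < gen_time G (UNIV - {idx i})" .
  obtain j where j: "j \<noteq> i" "gen_time G' (UNIV - {idx j}) > gen_time G (UNIV - {idx j})"
    using po ng' lt unfolding pareto_optimal_def by blast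
  have "idx j \<noteq> a" using j(1) i assms by (metis bij_pointE)
  hence "gen_time G' (UNIV - {idx j}) \<le> gen_time G (UNIV - {idx j})"
    using gen_time_le[OF B] gt by simp
  thus False using j(2) by simp
qed

end
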